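(* Let $D\subset\mathbb{C}$ be an open disk centered at $0$, $f_1,\dots,f_p:D\to\mathbb{C}$ analytic, $A_1,\dots,A_p\in\mathbb{C}^{n\times n}$ with $M(\lambda)=\sum_{m=1}^pf_m(\lambda)A_m$ satisfying $M(\lambda)^T=M(\lambda)$ on $D$, and $M_j:=M^{(j)}(0)$. Let $\mathbf{C}$, $\mathbf{S}$, $\mathbf{A}$, $\mathbf{B}$, $G_{k+1}$, $F_m$ be as described in the context, and assume the infinite matrix $\mathbf{S}$ is invertible. Let $\mathbf{q}_1$ be an infinite block vector whose only nonzero block is its first block $q_1\in\mathbb{C}^n$. Then Algorithm I (indefinite Lanczos) with starting vector $\mathbf{q}_1$ is applicable to the symmetric infinite problem $\mathbf{S}\mathbf{A}\mathbf{x}=\lambda\mathbf{S}\mathbf{B}\mathbf{x}$, and for every iteration $k$: the vector $\mathbf{q}_k$ has only its first $k$ blocks nonzero, the matrix whose columns are these $k$ blocks equals the matrix $Q_k$ generated by Algorithm II (infinite Lanczos) with starting matrix $Q_1=[q_1]$, and the coefficients $t_{i,j}$ and $\omega_i$ produced by the two algorithms coincide.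
   Context: Definitions. $\mathbf{C}=[c_{i,j}]_{i,j\ge1}$ is the infinite matrix determined by $c_{i,1}=1/(i+1)$ ($i\ge1$), $c_{i-1,j}=\frac{j}{i}c_{i,j-1}$ ($i,j>1$). $\mathbf{S}$ is the infinite block matrix with $n\times n$ blocks $S_{1,1}=I$, $S_{1,j}=S_{j,1}=0$ ($j\ge2$), $S_{i,j}=c_{i-1,j-1}M_{i+j-2}$ ($i,j\ge2$). $\mathbf{A}=\operatorname{diag}(-M_0,I,I,\dots)$. $\mathbf{B}$ has first block row $(M_1,\frac12M_2,\frac13M_3,\dots)$, blocks $\frac1jI$ at positions $(j+1,j)$, zeros elsewhere. $G_{k+1}\in\mathbb{R}^{(k+1)\times(k+1)}$ has $g_{j,1}=g_{1,j}=1/j$ and $g_{i,j}=c_{i-1,j}/j$ for $i,j\ge2$; $F_m\in\mathbb{C}^{(k+1)\times(k+1)}$ has $(i,j)$ entry $f_m^{(i+j-1)}(0)$. $\circ$ is the Hadamard product, $^T$ the non-conjugate transpose. Algorithm I (indefinite Lanczos for a symmetric pencil $\hat A x=\lambda\hat Bx$, here $\hat A=\mathbf{S}\mathbf{A}$, $\hat B=\mathbf{S}\mathbf{B}$): set $q_0=0$, $t_{0,1}=0$, $\omega_1=q_1^T\hat Bq_1$. For $k=1,2,\dots$: $w=\hat A^{-1}\hat Bq_k$; $z=\hat Bw$; $\alpha=z^Tq_k$, $\beta=z^Tq_{k-1}$, $\gamma=z^Tw$; $t_{k,k}=\alpha/\omega_k$, $t_{k-1,k}=\beta/\omega_{k-1}$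 (taken as $0$ when $k=1$); $w_\perp=w-t_{k,k}q_k-t_{k-1,k}q_{k-1}$; $t_{k+1,k}=\|w_\perp\|_2$; $q_{k+1}=w_\perp/t_{k+1,k}$; $\omega_{k+1}=(\gamma-2t_{k,k}\alpha-2t_{k-1,k}\beta+t_{k,k}^2\omega_k+t_{k-1,k}^2\omega_{k-1})/t_{k+1,k}^2$. Algorithm II (infinite Lanczos), with $Q_1\in\mathbb{C}^{n\times1}$: set $Q_0=0$, $t_{0,1}=0$, $\omega_1=Q_1^TM_1Q_1$. For $k=1,2,\dots$, with $Q_k=[\tilde q_1,\dots,\tilde q_k]\in\mathbb{C}^{n\times k}$: compute $w_1=-M_0^{-1}\sum_{j=1}^k\frac{M_j}{j}\tilde q_j$ and $W=w_1e_1^T+Q_kD\in\mathbb{C}^{n\times(k+1)}$, where $D\in\mathbb{R}^{k\times(k+1)}$ has $d_{j,j+1}=1/j$ and zeros elsewhere; compute $Z=\sum_{m=1}^pA_mW(G_{k+1}\circ F_m)$; pad $Q_k$ and $Q_{k-1}$ with zero columns to size $n\times(k+1)$ and compute $\alpha=\operatorname{vec}(Z)^T\operatorname{vec}(Q_k)$, $\beta=\operatorname{vec}(Z)^T\operatorname{vec}(Q_{k-1})$, $\gamma=\operatorname{vec}(Z)^T\operatorname{vec}(W)$; $t_{k,k}=\alpha/\omega_k$, $t_{k-1,k}=\beta/\omega_{k-1}$ ($0$ when $k=1$); $W_\perp=W-t_{k,k}Q_k-t_{k-1,k}Q_{k-1}$; $t_{k+1,k}=\|W_\perp\|_F$; $Q_{k+1}=W_\perp/t_{k+1,k}$;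 $\omega_{k+1}=(\gamma-2t_{k,k}\alpha-2t_{k-1,k}\beta+t_{k,k}^2\omega_k+t_{k-1,k}^2\omega_{k-1})/t_{k+1,k}^2$. *)

theory Defs
  imports "HOL-Complex_Analysis.Complex_Analysis"
begin

(* Conventions.
   n x n blocks: complex^'n^'n ('n an arbitrary finite index type, n = CARD('n)).
   Infinite block vectors: nat => complex^'n, blocks indexed 1,2,3,... (index 0 unused, kept 0).
   Infinite block matrices: nat => nat => complex^'n^'n, blocks indexed by i,j >= 1.
   Finite n x k matrices (Algorithm II): nat => complex^'n, columns indexed 1..k. *)

type_synonym 'n ivec = "nat \<Rightarrow> complex^'n::finite"
type_synonym 'n imat = "nat \<Rightarrow> nat \<Rightarrow> complex^'n^'n"

text \<open>non-conjugate bilinear form x^T y\<close>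
definition bdot :: "complex^'n::finite \<Rightarrow> complex^'n \<Rightarrow> complex" where
  "bdot x y = (\<Sum>i\<in>UNIV. x$i * y$i)"

definition smat :: "complex \<Rightarrow> complex^'n^'n \<Rightarrow> complex^'n^'n" where
  "smat a X = (\<chi> i j. a * X$i$j)"

definition bvec :: "('n::finite) ivec \<Rightarrow> bool" where
  "bvec x \<longleftrightarrow> x 0 = 0 \<and> (\<exists>N. \<forall>i>N. x i = 0)"

definition imv :: "('n::finite) imat \<Rightarrow> ('n::finite) ivec \<Rightarrow> ('n::finite) ivec" where
  "imv X x i = (if i = 0 then 0 else (\<Sum>l. X i (Suc l) *v x (Suc l)))"

definition imm :: "('n::finite) imat \<Rightarrow> ('n::finite) imat \<Rightarrow> ('n::finite) imat" where
  "imm X Y i j = (\<Sum>l. X i (Suc l) ** Y (Suc l) j)"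

definition idot :: "('n::finite) ivec \<Rightarrow> ('n::finite) ivec \<Rightarrow> complex" where
  "idot x y = (\<Sum>l. bdot (x (Suc l)) (y (Suc l)))"

definition inorm :: "('n::finite) ivec \<Rightarrow> real" where
  "inorm x = sqrt (\<Sum>l. (norm (x (Suc l)))^2)"

definition imat_invertible :: "('n::finite) imat \<Rightarrow> bool" where
  "imat_invertible X \<longleftrightarrow> (\<exists>Y.
     (\<forall>i\<ge>1. \<forall>j\<ge>1. (\<lambda>l. Y i (Suc l) ** X (Suc l) j) sums (if i = j then mat 1 else 0)) \<and>
     (\<forall>i\<ge>1. \<forall>j\<ge>1. (\<lambda>l. X i (Suc l) ** Y (Suc l) j) sums (if i = j then mat 1 else 0)))"

text \<open>The matrix C: c_{i,1} = 1/(i+1), c_{i-1,j} = j/i c_{i,j-1}, i.e.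
  c_{i,j+2} = (j+2)/(i+1) c_{i+1,j+1}. Meaningful for i,j >= 1.\<close>
fun cc :: "nat \<Rightarrow> nat \<Rightarrow> real" where
  "cc i 0 = 0"
| "cc i (Suc 0) = 1 / (real i + 1)"
| "cc i (Suc (Suc j)) = real (Suc (Suc j)) / (real i + 1) * cc (Suc i) (Suc j)"

definition Mfun :: "(nat \<Rightarrow> complex \<Rightarrow> complex) \<Rightarrow> (nat \<Rightarrow> complex^'n^'n) \<Rightarrow> nat
    \<Rightarrow> complex \<Rightarrow> complex^'n^'n" where
  "Mfun f Am p z = (\<Sum>m=1..p. smat (f m z) (Am m))"

definition Mder :: "(nat \<Rightarrow> complex \<Rightarrow> complex) \<Rightarrow> (nat \<Rightarrow> complex^'n^'n) \<Rightarrow> nat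
    \<Rightarrow> nat \<Rightarrow> complex^'n^'n" where
  "Mder f Am p j = (\<chi> a b. (deriv ^^ j) (\<lambda>z. Mfun f Am p z $ a $ b) 0)"

definition Smat :: "(nat \<Rightarrow> complex \<Rightarrow> complex) \<Rightarrow> (nat \<Rightarrow> complex^'n^'n) \<Rightarrow> nat \<Rightarrow> ('n::finite) imat" where
  "Smat f Am p i j =
     (if i = 1 \<and> j = 1 then mat 1
      else if i \<ge> 2 \<and> j \<ge> 2 then smat (complex_of_real (cc (i - 1) (j - 1))) (Mder f Am p (i + j - 2))
      else 0)"

definition Amat :: "(nat \<Rightarrow> complex \<Rightarrow> complex) \<Rightarrow> (nat \<Rightarrow> complex^'n^'n) \<Rightarrow> nat \<Rightarrow> ('n::finite) imat" where
  "Amat f Am p i j =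
     (if i = 1 \<and> j = 1 then - Mder f Am p 0
      else if i = j \<and> i \<ge> 2 then mat 1
      else 0)"

definition Bmat :: "(nat \<Rightarrow> complex \<Rightarrow> complex) \<Rightarrow> (nat \<Rightarrow> complex^'n^'n) \<Rightarrow> nat \<Rightarrow> ('n::finite) imat" where
  "Bmat f Am p i j =
     (if i = 1 \<and> j \<ge> 1 then smat (complex_of_real (1 / real j)) (Mder f Am p j)
      else if j \<ge> 1 \<and> i = j + 1 then smat (complex_of_real (1 / real j)) (mat 1)
      else 0)"

text \<open>G_{k+1} entries (independent of k apart from the size) and F_m entries\<close>
definition gg :: "nat \<Rightarrow> nat \<Rightarrow> real" where
  "gg i j = (if j = 1 then 1 / real i else if i = 1 then 1 / real j
             else cc (i - 1) j / real j)"

definition Fm :: "(nat \<Rightarrow> complex \<Rightarrow> complex) \<Rightarrow> nat \<Rightarrow> nat \<Rightarrow> nat \<Rightarrow> complex" where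
  "Fm f m i j = (deriv ^^ (i + j - 1)) (f m) 0"

text \<open>state at iteration k: (q_{k-1}, q_k, omega_{k-1}, omega_k);
  w = Ahat^{-1} Bhat q_k is the (finitely supported) solution of Ahat w = Bhat q_k.
  The step returns the new state and (t_{k,k}, t_{k-1,k}, t_{k+1,k}).\<close>
definition stepI :: "('n::finite) imat \<Rightarrow> ('n::finite) imat \<Rightarrow> ('n::finite) ivec \<times> ('n::finite) ivec \<times> complex \<times> complex
    \<Rightarrow> (('n::finite) ivec \<times> ('n::finite) ivec \<times> complex \<times> complex) \<times> (complex \<times> complex \<times> complex)" where
  "stepI Ah Bh st = (case st of (qp, qc, wp, wc) \<Rightarrow>
     (let w = (THE w. bvec w \<and> imv Ah w = imv Bh qc);
          z = imv Bh w;
          \<alpha> = idot z qc; \<beta> = idot z qp; \<gamma> = idot z w;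
          tkk = \<alpha> / wc; tpk = \<beta> / wp;
          wperp = (\<lambda>i. w i - tkk *s qc i - tpk *s qp i);
          tn = complex_of_real (inorm wperp);
          qn = (\<lambda>i. inverse tn *s wperp i);
          wn = (\<gamma> - 2 * tkk * \<alpha> - 2 * tpk * \<beta> + tkk^2 * wc + tpk^2 * wp) / tn^2
      in ((qc, qn, wc, wn), (tkk, tpk, tn))))"

fun stateI :: "('n::finite) imat \<Rightarrow> ('n::finite) imat \<Rightarrow> ('n::finite) ivec \<Rightarrow> nat \<Rightarrow> ('n::finite) ivec \<times> ('n::finite) ivec \<times> complex \<times> complex" where
  "stateI Ah Bh q1 0 = ((\<lambda>_. 0), q1, 0, idot q1 (imv Bh q1))"
| "stateI Ah Bh q1 (Suc k) = fst (stepI Ah Bh (stateI Ah Bh q1 k))"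

definition qI :: "('n::finite) imat \<Rightarrow> ('n::finite) imat \<Rightarrow> ('n::finite) ivec \<Rightarrow> nat \<Rightarrow> ('n::finite) ivec" where
  "qI Ah Bh q1 k = fst (snd (stateI Ah Bh q1 (k - 1)))"
definition omegaI :: "('n::finite) imat \<Rightarrow> ('n::finite) imat \<Rightarrow> ('n::finite) ivec \<Rightarrow> nat \<Rightarrow> complex" where
  "omegaI Ah Bh q1 k = snd (snd (snd (stateI Ah Bh q1 (k - 1))))"
definition tI :: "('n::finite) imat \<Rightarrow> ('n::finite) imat \<Rightarrow> ('n::finite) ivec \<Rightarrow> nat \<Rightarrow> complex \<times> complex \<times> complex" where
  "tI Ah Bh q1 k = snd (stepI Ah Bh (stateI Ah Bh q1 (k - 1)))"

definition padc :: "nat \<Rightarrow> (nat \<Rightarrow> complex^'n) \<Rightarrow> nat \<Rightarrow> complex^'n" where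
  "padc k Q j = (if 1 \<le> j \<and> j \<le> k then Q j else 0)"

text \<open>step k; state (Q_{k-1}, Q_k, omega_{k-1}, omega_k), Q_k having k columns\<close>
definition stepII :: "(nat \<Rightarrow> complex \<Rightarrow> complex) \<Rightarrow> (nat \<Rightarrow> complex^'n^'n) \<Rightarrow> nat \<Rightarrow> nat
    \<Rightarrow> (nat \<Rightarrow> complex^'n) \<times> (nat \<Rightarrow> complex^'n) \<times> complex \<times> complex
    \<Rightarrow> ((nat \<Rightarrow> complex^'n) \<times> (nat \<Rightarrow> complex^'n) \<times> complex \<times> complex) \<times> (complex \<times> complex \<times> complex)" where
  "stepII f Am p k st = (case st of (Qp, Qc, wp, wc) \<Rightarrow>
     (let w1 = - (matrix_inv (Mder f Am p 0) *v
                  (\<Sum>j=1..k. smat (complex_of_real (1 / real j)) (Mder f Am p j) *v Qc j));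
          W = (\<lambda>i. if i = 1 then w1
                    else if 2 \<le> i \<and> i \<le> k + 1 then complex_of_real (1 / real (i - 1)) *s Qc (i - 1)
                    else 0);
          Z = (\<lambda>j. if 1 \<le> j \<and> j \<le> k + 1 then
                     (\<Sum>m=1..p. Am m *v (\<Sum>i=1..k+1. (complex_of_real (gg i j) * Fm f m i j) *s W i))
                   else 0);
          \<alpha> = (\<Sum>j=1..k+1. bdot (Z j) (padc k Qc j));
          \<beta> = (\<Sum>j=1..k+1. bdot (Z j) (padc (k - 1) Qp j));
          \<gamma> = (\<Sum>j=1..k+1. bdot (Z j) (W j));
          tkk = \<alpha> / wc; tpk = \<beta> / wp;
          Wperp = (\<lambda>j. if 1 \<le> j \<and> j \<le> k + 1 then
                        W j - tkk *s padc k Qc j - tpk *s padc (k - 1) Qp j else 0);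
          tn = complex_of_real (sqrt (\<Sum>j=1..k+1. (norm (Wperp j))^2));
          Qn = (\<lambda>j. inverse tn *s Wperp j);
          wn = (\<gamma> - 2 * tkk * \<alpha> - 2 * tpk * \<beta> + tkk^2 * wc + tpk^2 * wp) / tn^2
      in ((Qc, Qn, wc, wn), (tkk, tpk, tn))))"

fun stateII :: "(nat \<Rightarrow> complex \<Rightarrow> complex) \<Rightarrow> (nat \<Rightarrow> complex^'n^'n) \<Rightarrow> nat \<Rightarrow> complex^'n
    \<Rightarrow> nat \<Rightarrow> (nat \<Rightarrow> complex^'n) \<times> (nat \<Rightarrow> complex^'n) \<times> complex \<times> complex" where
  "stateII f Am p q1 0 = ((\<lambda>_. 0), (\<lambda>j. if j = 1 then q1 else 0), 0,
                         bdot q1 (Mder f Am p 1 *v q1))"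
| "stateII f Am p q1 (Suc k) = fst (stepII f Am p (Suc k) (stateII f Am p q1 k))"

definition QII where "QII f Am p q1 k = fst (snd (stateII f Am p q1 (k - 1)))"
definition omegaII where "omegaII f Am p q1 k = snd (snd (snd (stateII f Am p q1 (k - 1))))"
definition tII where "tII f Am p q1 k = snd (stepII f Am p k (stateII f Am p q1 (k - 1)))"

end

theory Submission
  imports Defs
begin

lemma minv_right:
  fixes M :: "'a::semiring_1^'n^'n"
  assumes "invertible M"
  shows "M ** matrix_inv M = mat 1" "matrix_inv M ** M = mat 1"
proof -
  have "\<exists>A'. M ** A' = mat 1 \<and> A' ** M = mat 1" using assms unfolding invertible_def by blast
  from someI_ex[OF this] show "M ** matrix_inv M = mat 1" "matrix_inv M ** M = mat 1"
    unfolding matrix_inv_def by auto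
qed

lemma sums_Suc_fin:
  fixes g :: "nat \<Rightarrow> 'a::{t2_space,comm_monoid_add}"
  assumes "\<And>i. i > N \<Longrightarrow> g i = 0"
  shows "(\<lambda>l. g (Suc l)) sums (\<Sum>i=1..N. g i)"
proof -
  have "(\<lambda>l. g (Suc l)) sums (\<Sum>l<N. g (Suc l))"
    by (rule sums_finite) (auto intro: assms)
  moreover have "(\<Sum>l<N. g (Suc l)) = (\<Sum>i=1..N. g i)"
    by (simp add: sum.atLeast1_atMost_eq)
  ultimately show ?thesis by simp
qed

lemma suminf_Suc_fin:
  fixes g :: "nat \<Rightarrow> 'a::{t2_space,comm_monoid_add}"
  assumes "\<And>i. i > N \<Longrightarrow> g i = 0"
  shows "(\<Sum>l. g (Suc l)) = (\<Sum>i=1..N. g i)"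
  by (rule sums_unique[OF sums_Suc_fin[OF assms], symmetric])

lemma suminf_single:
  fixes g :: "nat \<Rightarrow> 'a::{t2_space,comm_monoid_add}"
  assumes "\<And>l. l \<noteq> a \<Longrightarrow> g l = 0"
  shows "suminf g = g a"
  by (subst suminf_finite[of "{a}"]) (auto simp: assms)

lemma bl_mv: "bounded_linear (\<lambda>X::complex^'n^'m. X *v x)"
proof -
  have "linear (\<lambda>X::complex^'n^'m. X *v x)"
    by (rule linearI) (auto simp: matrix_vector_mult_add_rdistrib vec_eq_iff matrix_vector_mult_def
        scaleR_sum_right sum.distrib distrib_right)
  then show ?thesis using linear_conv_bounded_linear by blast
qed

lemma smat_mult: "smat a X ** smat b Y = smat (a*b) (X ** Y)"
  by (simp add: smat_def matrix_matrix_mult_def vec_eq_iff sum_distrib_left mult_ac)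

lemma smat_mv: "smat a X *v v = a *s (X *v v)"
  by (simp add: smat_def matrix_vector_mult_def vec_eq_iff sum_distrib_left mult_ac)

lemma transpose_smat: "transpose (smat a X) = smat a (transpose X)"
  by (simp add: smat_def transpose_def vec_eq_iff)

lemma smat_mat1_r: "X ** smat a (mat 1) = smat a X"
  by (simp add: smat_def matrix_matrix_mult_def vec_eq_iff mat_def if_distrib cong: if_cong)

lemma mv_sum_r: "A *v (\<Sum>i\<in>I. v i) = (\<Sum>i\<in>I. A *v v i)"
  by (induct I rule: infinite_finite_induct) (simp_all add: matrix_vector_right_distrib)

lemma mv_sum_l: "(\<Sum>i\<in>I. X i) *v v = (\<Sum>i\<in>I. X i *v v)"
  by (induct I rule: infinite_finite_induct) (simp_all add: matrix_vector_mult_add_rdistrib)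

lemma mv_uminus_l: "(- A) *v x = - (A *v (x::'a::comm_ring_1^'n))"
  by (simp add: matrix_vector_mult_def vec_eq_iff sum_negf)

lemma mv_uminus_r: "A *v (- x) = - (A *v (x::'a::comm_ring_1^'n))"
  by (simp add: matrix_vector_mult_def vec_eq_iff sum_negf)

lemma bdot_zero[simp]: "bdot x 0 = 0"
  by (simp add: bdot_def)


lemma cc_closed: "cc a (Suc b) = fact a * fact (Suc b) / fact (a + Suc b)"
proof (induction b arbitrary: a)
  case 0
  have "fact a * fact (Suc 0) / fact (a + Suc 0) = fact a / ((real a + 1) * fact a)"
    by (simp add: algebra_simps)
  also have "\<dots> = 1 / (real a + 1)" by simp
  finally show ?case by simp
next
  case (Suc b)
  have "cc a (Suc (Suc b)) = real (Suc (Suc b)) / (real a + 1) * cc (Suc a) (Suc b)" by simp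
  also have "\<dots> = real (Suc (Suc b)) / (real a + 1) * (fact (Suc a) * fact (Suc b) / fact (Suc a + Suc b))"
    using Suc by simp
  also have "\<dots> = real (Suc (Suc b)) / (real a + 1) * ((real a + 1) * fact a * fact (Suc b) / fact (a + Suc (Suc b)))"
  proof -
    have e1: "fact (Suc a) = (real a + 1) * (fact a::real)" by simp
    have e3: "Suc a + Suc b = a + Suc (Suc b)" by simp
    show ?thesis by (simp only: e1 e3)
  qed
  also have "\<dots> = fact a * (real (Suc (Suc b)) * fact (Suc b)) / fact (a + Suc (Suc b))"
  proof -
    have "real a + 1 \<noteq> 0" by simp
    then show ?thesis by (simp only: field_simps) simp
  qed
  also have "\<dots> = fact a * fact (Suc (Suc b)) / fact (a + Suc (Suc b))"
    by (simp only: fact_Suc[of "Suc b"])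
  finally show ?case .
qed

lemma cc_sym_aux: "cc a (Suc b) / real (Suc b) = fact a * fact b / fact (a + Suc b)"
proof -
  have e: "fact (Suc b) = real (Suc b) * (fact b :: real)" by (rule fact_Suc)
  have "cc a (Suc b) / real (Suc b) = fact a * (real (Suc b) * fact b) / fact (a + Suc b) / real (Suc b)"
    by (simp only: cc_closed e)
  also have "\<dots> = fact a * fact b / fact (a + Suc b)"
    by (simp del: fact_Suc of_nat_Suc)
  finally show ?thesis .
qed

lemma cc_sym: assumes "i \<ge> 1" "j \<ge> 1" shows "cc (i - 1) j / real j = cc (j - 1) i / real i"
proof -
  obtain a b where "i = Suc a" "j = Suc b" using assms by (metis Suc_le_D One_nat_def)
  then show ?thesis using cc_sym_aux[of a b] cc_sym_aux[of b a] by (simp add: add.commute mult.commute)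
qed

lemma gg_sym: assumes "i \<ge> 1" "j \<ge> 1" shows "gg i j = gg j i"
  using cc_sym[OF assms] by (auto simp: gg_def)

lemma smat_smat: "smat a (smat b X) = smat (a * b) X"
  by (simp add: smat_def vec_eq_iff mult.assoc)

lemma smat_zero[simp]: "smat a 0 = 0"
  by (simp add: smat_def vec_eq_iff)

context
  fixes f :: "nat \<Rightarrow> complex \<Rightarrow> complex" and Am :: "nat \<Rightarrow> complex^'n::finite^'n" and p :: nat
begin

lemma Ah_entry:
  assumes "j \<ge> 1"
  shows "imm (Smat f Am p) (Amat f Am p) i j = Smat f Am p i j ** Amat f Am p j j"
proof -
  have "imm (Smat f Am p) (Amat f Am p) i j = Smat f Am p i (Suc (j - 1)) ** Amat f Am p (Suc (j - 1)) j"
    unfolding imm_def by (rule suminf_single) (auto simp: Amat_def)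
  then show ?thesis using assms by simp
qed

lemma Ah_explicit:
  assumes "i \<ge> 1" "j \<ge> 1"
  shows "imm (Smat f Am p) (Amat f Am p) i j =
    (if i = 1 \<and> j = 1 then - Mder f Am p 0 else if i \<ge> 2 \<and> j \<ge> 2 then Smat f Am p i j else 0)"
  using assms by (auto simp: Ah_entry Smat_def Amat_def)

lemma Bh_entry:
  assumes "j \<ge> 1"
  shows "imm (Smat f Am p) (Bmat f Am p) i j =
     Smat f Am p i 1 ** Bmat f Am p 1 j + Smat f Am p i (Suc j) ** Bmat f Am p (Suc j) j"
proof -
  have "imm (Smat f Am p) (Bmat f Am p) i j = (\<Sum>l\<in>{0, j}. Smat f Am p i (Suc l) ** Bmat f Am p (Suc l) j)"
    unfolding imm_def by (rule suminf_finite) (auto simp: Bmat_def)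
  then show ?thesis using assms by simp
qed

lemma Bh_gg:
  assumes "i \<ge> 1" "j \<ge> 1"
  shows "imm (Smat f Am p) (Bmat f Am p) i j = smat (gg i j) (Mder f Am p (i + j - 1))"
proof (cases "i = 1")
  case True
  then show ?thesis using assms
    by (simp add: Bh_entry Smat_def Bmat_def gg_def)
next
  case False
  then have i2: "i \<ge> 2" using assms by simp
  have "imm (Smat f Am p) (Bmat f Am p) i j = smat (complex_of_real (cc (i - 1) j / real j)) (Mder f Am p (i + j - 1))"
    using assms i2 by (simp add: Bh_entry Smat_def Bmat_def smat_mat1_r smat_smat mult.commute)
  moreover have "cc (i - 1) j / real j = gg i j"
    using i2 by (auto simp: gg_def)
  then have "complex_of_real (gg i j) = complex_of_real (cc (i - 1) j) / complex_of_nat j"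
    by (metis of_real_divide of_real_of_nat_eq)
  ultimately show ?thesis by simp
qed

end


lemma higher_deriv_sum_cmult:
  fixes g :: "nat \<Rightarrow> complex \<Rightarrow> complex"
  assumes "finite I" "\<forall>m\<in>I. g m holomorphic_on S" "open S" "z \<in> S"
  shows "(deriv ^^ d) (\<lambda>w. \<Sum>m\<in>I. c m * g m w) z = (\<Sum>m\<in>I. c m * (deriv ^^ d) (g m) z)"
  using assms(1,2)
proof (induction I rule: finite_induct)
  case empty
  then show ?case by simp
next
  case (insert x F)
  have h1: "(\<lambda>w. c x * g x w) holomorphic_on S" using insert by (auto intro!: holomorphic_intros)
  have h2: "(\<lambda>w. \<Sum>m\<in>F. c m * g m w) holomorphic_on S" using insert by (auto intro!: holomorphic_intros)
  have "(deriv ^^ d) (\<lambda>w. \<Sum>m\<in>insert x F. c m * g m w) z =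
        (deriv ^^ d) (\<lambda>w. c x * g x w + (\<Sum>m\<in>F. c m * g m w)) z"
    using insert by simp
  also have "\<dots> = (deriv ^^ d) (\<lambda>w. c x * g x w) z + (deriv ^^ d) (\<lambda>w. \<Sum>m\<in>F. c m * g m w) z"
    by (rule higher_deriv_add[OF h1 h2 assms(3,4)])
  also have "(deriv ^^ d) (\<lambda>w. c x * g x w) z = c x * (deriv ^^ d) (g x) z"
    using insert assms(3,4) by (intro higher_deriv_cmult) auto
  finally show ?case using insert by simp
qed

context
  fixes f :: "nat \<Rightarrow> complex \<Rightarrow> complex" and Am :: "nat \<Rightarrow> complex^'n::finite^'n" and p :: nat
    and r :: real
  assumes r_pos: "r > 0"
    and analytic: "\<forall>m\<in>{1..p}. f m holomorphic_on ball 0 r"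
    and symmetric: "\<forall>z\<in>ball 0 r. transpose (Mfun f Am p z) = Mfun f Am p z"
begin

lemma M_sym: "transpose (Mder f Am p d) = Mder f Am p d"
proof -
  have "(deriv ^^ d) (\<lambda>z. Mfun f Am p z $ b $ a) 0 = (deriv ^^ d) (\<lambda>z. Mfun f Am p z $ a $ b) 0" for a b
  proof (rule higher_deriv_cong_ev)
    have "\<forall>\<^sub>F z in nhds 0. z \<in> ball (0::complex) r"
      using r_pos by (intro eventually_nhds_in_open) auto
    then show "\<forall>\<^sub>F z in nhds 0. Mfun f Am p z $ b $ a = Mfun f Am p z $ a $ b"
    proof (rule eventually_mono)
      fix z :: complex assume "z \<in> ball 0 r"
      then have "transpose (Mfun f Am p z) $ a $ b = Mfun f Am p z $ a $ b" using symmetric by simp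
      then show "Mfun f Am p z $ b $ a = Mfun f Am p z $ a $ b" by (simp add: transpose_def)
    qed
  qed simp
  then show ?thesis by (simp add: Mder_def transpose_def vec_eq_iff)
qed

lemma M_sum: "Mder f Am p d = (\<Sum>m=1..p. smat ((deriv ^^ d) (f m) 0) (Am m))"
proof -
  have "(deriv ^^ d) (\<lambda>z. Mfun f Am p z $ a $ b) 0 = (\<Sum>m=1..p. Am m $ a $ b * (deriv ^^ d) (f m) 0)" for a b
  proof -
    have "(\<lambda>z. Mfun f Am p z $ a $ b) = (\<lambda>z. \<Sum>m\<in>{1..p}. Am m $ a $ b * f m z)"
      by (simp add: Mfun_def smat_def mult.commute)
    then show ?thesis using analytic r_pos
      by (simp add: higher_deriv_sum_cmult)
  qed
  then show ?thesis by (simp add: Mder_def vec_eq_iff smat_def mult.commute)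
qed

end


lemma imv_fin:
  assumes "\<forall>i>N. x i = 0"
  shows "imv X x i = (if i = 0 then 0 else (\<Sum>l=1..N. X i l *v x l))"
proof -
  have "(\<Sum>l. X i (Suc l) *v x (Suc l)) = (\<Sum>l=1..N. X i l *v x l)"
    by (rule suminf_Suc_fin[where g = "\<lambda>l. X i l *v x l"]) (simp add: assms)
  then show ?thesis by (simp add: imv_def)
qed

lemma imv_diff:
  assumes "\<forall>i>N. x i = 0" "\<forall>i>N. y i = 0"
  shows "imv X (\<lambda>i. x i - y i) i = imv X x i - imv X y i"
proof -
  have "\<forall>i>N. x i - y i = 0" using assms by simp
  then show ?thesis
    using imv_fin[OF assms(1)] imv_fin[OF assms(2)] imv_fin[of N "\<lambda>i. x i - y i"]
    by (simp add: matrix_vector_mult_diff_distrib sum_subtractf)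
qed

lemma S_inj:
  fixes S Y :: "('n::finite) imat"
  assumes Yleft: "\<forall>i\<ge>1. \<forall>j\<ge>1. (\<lambda>l. Y i (Suc l) ** S (Suc l) j) sums (if i = j then mat 1 else 0)"
    and u0: "u 0 = 0" and uN: "\<forall>i>N. u i = 0" and Su: "\<forall>i\<ge>1. imv S u i = 0"
  shows "u i = 0"
proof (cases "i = 0")
  case True then show ?thesis using u0 by simp
next
  case False
  then have i1: "i \<ge> 1" by simp
  have trm: "Y i (Suc l) *v imv S u (Suc l) = (\<Sum>m=1..N. (Y i (Suc l) ** S (Suc l) m) *v u m)" for l
    by (simp add: imv_fin[OF uN] mv_sum_r matrix_vector_mul_assoc)
  have "(\<lambda>l. \<Sum>m\<in>{1..N}. (Y i (Suc l) ** S (Suc l) m) *v u m) sums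
        (\<Sum>m\<in>{1..N}. (if i = m then mat 1 else 0) *v u m)"
  proof (rule sums_sum)
    fix m assume "m \<in> {1..N}"
    then have "(\<lambda>l. Y i (Suc l) ** S (Suc l) m) sums (if i = m then mat 1 else 0)"
      using Yleft i1 by auto
    then show "(\<lambda>l. (Y i (Suc l) ** S (Suc l) m) *v u m) sums ((if i = m then mat 1 else 0) *v u m)"
      by (rule bounded_linear.sums[OF bl_mv])
  qed
  moreover have "(\<Sum>m\<in>{1..N}. (if i = m then mat 1 else 0) *v u m) = u i"
  proof -
    have "(\<Sum>m\<in>{1..N}. (if i = m then mat 1 else 0) *v u m) = (\<Sum>m\<in>{1..N}. if i = m then u m else 0)"
      by (rule sum.cong) auto
    also have "\<dots> = u i" using uN i1 by (auto simp: sum.delta)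
    finally show ?thesis .
  qed
  moreover have "(\<lambda>l. \<Sum>m\<in>{1..N}. (Y i (Suc l) ** S (Suc l) m) *v u m) = (\<lambda>l. 0)"
  proof (rule ext)
    fix l
    have "imv S u (Suc l) = 0" using Su by simp
    then show "(\<Sum>m\<in>{1..N}. (Y i (Suc l) ** S (Suc l) m) *v u m) = 0"
      using trm[of l] by simp
  qed
  ultimately have "(\<lambda>l. 0) sums u i" by simp
  from sums_unique2[OF this sums_zero] show ?thesis .
qed


definition Wv :: "(nat \<Rightarrow> complex \<Rightarrow> complex) \<Rightarrow> (nat \<Rightarrow> complex^'n^'n) \<Rightarrow> nat \<Rightarrow> nat
    \<Rightarrow> (nat \<Rightarrow> complex^'n::finite) \<Rightarrow> nat \<Rightarrow> complex^'n" where
  "Wv f Am p k Qc = (\<lambda>i. if i = 1 then - (matrix_inv (Mder f Am p 0) *v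
                  (\<Sum>j=1..k. smat (complex_of_real (1 / real j)) (Mder f Am p j) *v Qc j))
                    else if 2 \<le> i \<and> i \<le> k + 1 then complex_of_real (1 / real (i - 1)) *s Qc (i - 1)
                    else 0)"

lemma Wv_supp: "\<forall>i>k+1. Wv f Am p k q i = 0" "Wv f Am p k q 0 = 0"
  by (auto simp: Wv_def)

lemma imv_Ah:
  "imv (imm (Smat f Am p) (Amat f Am p)) x =
   imv (Smat f Am p) (\<lambda>l. if l = 0 then 0 else Amat f Am p l l *v x l)"
  by (rule ext) (simp add: imv_def Ah_entry matrix_vector_mul_assoc)

context
  fixes f :: "nat \<Rightarrow> complex \<Rightarrow> complex" and Am :: "nat \<Rightarrow> complex^'n::finite^'n" and p :: nat
  assumes M0_inv: "invertible (Mder f Am p 0)"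
begin

lemma W_solves:
  assumes k1: "k \<ge> 1" and q0: "q 0 = 0" and qk: "\<forall>i>k. q i = 0"
  shows "imv (imm (Smat f Am p) (Amat f Am p)) (Wv f Am p k q) = imv (imm (Smat f Am p) (Bmat f Am p)) q"
proof (rule ext)
  fix i
  let ?W = "Wv f Am p k q"
  let ?Ah = "imm (Smat f Am p) (Amat f Am p)"
  let ?Bh = "imm (Smat f Am p) (Bmat f Am p)"
  let ?M = "Mder f Am p"
  have LA: "imv ?Ah ?W i = (if i = 0 then 0 else \<Sum>l=1..k+1. ?Ah i l *v ?W l)"
    by (rule imv_fin) (simp add: Wv_supp)
  have LB: "imv ?Bh q i = (if i = 0 then 0 else \<Sum>l=1..k. ?Bh i l *v q l)"
    by (rule imv_fin) (simp add: qk)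
  show "imv ?Ah ?W i = imv ?Bh q i"
  proof (cases "i = 0")
    case True then show ?thesis using LA LB by simp
  next
    case False
    show ?thesis
    proof (cases "i = 1")
      case True
      have "(\<Sum>l=1..k+1. ?Ah i l *v ?W l) = (\<Sum>l=1..k+1. if l = 1 then - ?M 0 *v ?W 1 else 0)"
        by (rule sum.cong) (auto simp: Ah_explicit True)
      also have "\<dots> = - ?M 0 *v ?W 1" by (simp add: sum.delta)
      also have "\<dots> = (?M 0 ** matrix_inv (?M 0)) *v
                  (\<Sum>j=1..k. smat (complex_of_real (1 / real j)) (?M j) *v q j)"
        by (simp add: Wv_def matrix_vector_mul_assoc[symmetric] mv_uminus_l mv_uminus_r)
      also have "\<dots> = (\<Sum>j=1..k. smat (complex_of_real (1 / real j)) (?M j) *v q j)"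
        by (simp add: minv_right[OF M0_inv])
      also have "\<dots> = (\<Sum>l=1..k. ?Bh i l *v q l)"
        by (rule sum.cong) (auto simp: True Bh_gg gg_def)
      finally show ?thesis using LA LB False by simp
    next
      case False
      with \<open>i \<noteq> 0\<close> have i2: "i \<ge> 2" by simp
      let ?g = "\<lambda>l. ?Ah i l *v ?W l"
      have "(\<Sum>l=1..k+1. ?g l) = ?g 1 + (\<Sum>l=Suc 1..Suc k. ?g l)"
        by (simp add: sum.atLeast_Suc_atMost)
      also have "?g 1 = 0" using i2 by (simp add: Ah_explicit)
      also have "(\<Sum>l=Suc 1..Suc k. ?g l) = (\<Sum>l=1..k. ?g (Suc l))"
        by (rule sum.shift_bounds_cl_Suc_ivl)
      also have "\<dots> = (\<Sum>l=1..k. ?Bh i l *v q l)"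
      proof (rule sum.cong)
        fix l assume l: "l \<in> {1..k}"
        have "?g (Suc l) = Smat f Am p i (Suc l) *v (complex_of_real (1 / real l) *s q l)"
          using l i2 by (simp add: Ah_explicit Wv_def)
        also have "\<dots> = ?Bh i l *v q l"
          using l i2 by (simp add: Bh_entry Smat_def Bmat_def smat_mat1_r smat_mv vector_scalar_commute)
        finally show "?g (Suc l) = ?Bh i l *v q l" .
      qed simp
      finally show ?thesis using LA LB \<open>i \<noteq> 0\<close> by simp
    qed
  qed
qed

end


context
  fixes f :: "nat \<Rightarrow> complex \<Rightarrow> complex" and Am :: "nat \<Rightarrow> complex^'n::finite^'n" and p :: nat
  assumes M0_inv: "invertible (Mder f Am p 0)"
    and S_inv: "imat_invertible (Smat f Am p)"
begin

lemma A_inj: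
  assumes "i \<ge> 1" "Amat f Am p i i *v d = 0"
  shows "d = 0"
proof (cases "i = 1")
  case True
  then have "Mder f Am p 0 *v d = 0" using assms by (simp add: Amat_def mv_uminus_l)
  then have "matrix_inv (Mder f Am p 0) *v (Mder f Am p 0 *v d) = 0" by simp
  then show ?thesis by (simp add: matrix_vector_mul_assoc minv_right[OF M0_inv])
next
  case False
  then show ?thesis using assms by (simp add: Amat_def)
qed

lemma sol_unique:
  assumes w: "bvec w" and w': "bvec w'"
    and eq: "imv (imm (Smat f Am p) (Amat f Am p)) w = imv (imm (Smat f Am p) (Amat f Am p)) w'"
  shows "w = w'"
proof -
  obtain Y where Yleft: "\<forall>i\<ge>1. \<forall>j\<ge>1. (\<lambda>l. Y i (Suc l) ** Smat f Am p (Suc l) j) sums (if i = j then mat 1 else 0)"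
    using S_inv unfolding imat_invertible_def by blast
  obtain N1 where N1: "\<forall>i>N1. w i = 0" using w unfolding bvec_def by blast
  obtain N2 where N2: "\<forall>i>N2. w' i = 0" using w' unfolding bvec_def by blast
  define N where "N = max N1 N2"
  define Aw where "Aw = (\<lambda>l. if l = 0 then 0 else Amat f Am p l l *v w l)"
  define Aw' where "Aw' = (\<lambda>l. if l = 0 then 0 else Amat f Am p l l *v w' l)"
  have sA: "\<forall>i>N. Aw i = 0" "\<forall>i>N. Aw' i = 0" using N1 N2 by (auto simp: N_def Aw_def Aw'_def)
  have "imv (Smat f Am p) Aw = imv (Smat f Am p) Aw'"
    using eq by (simp add: imv_Ah Aw_def Aw'_def)
  then have Su: "\<forall>i\<ge>1. imv (Smat f Am p) (\<lambda>i. Aw i - Aw' i) i = 0"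
    by (simp add: imv_diff[OF sA])
  have sN: "\<forall>i>N. Aw i - Aw' i = 0" using sA by simp
  have z0: "Aw 0 - Aw' 0 = 0" by (simp add: Aw_def Aw'_def)
  have u0: "Aw i - Aw' i = 0" for i
    by (rule S_inj[where u = "\<lambda>i. Aw i - Aw' i" and N = N, OF Yleft z0 sN Su])
  show ?thesis
  proof (rule ext)
    fix i
    show "w i = w' i"
    proof (cases "i = 0")
      case True then show ?thesis using w w' by (simp add: bvec_def)
    next
      case False
      then have "Amat f Am p i i *v (w i - w' i) = 0"
        using u0[of i] by (simp add: Aw_def Aw'_def matrix_vector_mult_diff_distrib)
      moreover have "i \<ge> 1" using False by simp
      ultimately have "w i - w' i = 0" by (rule A_inj[rotated])
      then show ?thesis by simp
    qed
  qed
qed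

lemma the_w:
  assumes k1: "k \<ge> 1" and q0: "q 0 = 0" and qk: "\<forall>i>k. q i = 0"
  shows "(\<exists>!w. bvec w \<and> imv (imm (Smat f Am p) (Amat f Am p)) w = imv (imm (Smat f Am p) (Bmat f Am p)) q)"
    and "(THE w. bvec w \<and> imv (imm (Smat f Am p) (Amat f Am p)) w = imv (imm (Smat f Am p) (Bmat f Am p)) q)
          = Wv f Am p k q"
proof -
  have b: "bvec (Wv f Am p k q)"
    unfolding bvec_def
  proof
    show "Wv f Am p k q 0 = 0" by (rule Wv_supp(2))
    show "\<exists>N. \<forall>i>N. Wv f Am p k q i = 0" by (rule exI[of _ "k+1"], rule Wv_supp(1))
  qed
  have s: "imv (imm (Smat f Am p) (Amat f Am p)) (Wv f Am p k q) = imv (imm (Smat f Am p) (Bmat f Am p)) q"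
    by (rule W_solves[OF M0_inv k1 q0 qk])
  have u: "w = Wv f Am p k q"
    if h: "bvec w \<and> imv (imm (Smat f Am p) (Amat f Am p)) w = imv (imm (Smat f Am p) (Bmat f Am p)) q" for w
  proof (rule sol_unique[OF conjunct1[OF h] b])
    show "imv (imm (Smat f Am p) (Amat f Am p)) w = imv (imm (Smat f Am p) (Amat f Am p)) (Wv f Am p k q)"
      by (simp only: conjunct2[OF h] s)
  qed
  have bs: "bvec (Wv f Am p k q) \<and> imv (imm (Smat f Am p) (Amat f Am p)) (Wv f Am p k q) = imv (imm (Smat f Am p) (Bmat f Am p)) q"
    using b s by (rule conjI)
  show "\<exists>!w. bvec w \<and> imv (imm (Smat f Am p) (Amat f Am p)) w = imv (imm (Smat f Am p) (Bmat f Am p)) q"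
    by (rule ex1I[of _ "Wv f Am p k q"], rule bs, rule u)
  show "(THE w. bvec w \<and> imv (imm (Smat f Am p) (Amat f Am p)) w = imv (imm (Smat f Am p) (Bmat f Am p)) q)
          = Wv f Am p k q"
    by (rule the_equality, rule bs, rule u)
qed

end


lemma smult_sum: "(a::'a::comm_ring_1) *s (\<Sum>i\<in>I. v i) = (\<Sum>i\<in>I. a *s v i)"
  by (simp add: vec_eq_iff sum_distrib_left)

lemma smult_smult: "(a::'a::comm_ring_1) *s (b *s v) = (a * b) *s v"
  by (simp add: vec_eq_iff mult.assoc)

context
  fixes f :: "nat \<Rightarrow> complex \<Rightarrow> complex" and Am :: "nat \<Rightarrow> complex^'n::finite^'n" and p :: nat
    and r :: real
  assumes r_pos: "r > 0"
    and analytic: "\<forall>m\<in>{1..p}. f m holomorphic_on ball 0 r"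
    and symmetric: "\<forall>z\<in>ball 0 r. transpose (Mfun f Am p z) = Mfun f Am p z"
begin

lemma Bh_Z:
  assumes xN: "\<forall>i>N. x i = 0" and j1: "j \<ge> 1"
  shows "imv (imm (Smat f Am p) (Bmat f Am p)) x j =
    (\<Sum>m=1..p. Am m *v (\<Sum>i=1..N. (complex_of_real (gg i j) * Fm f m i j) *s x i))"
proof -
  have "imv (imm (Smat f Am p) (Bmat f Am p)) x j = (\<Sum>i=1..N. imm (Smat f Am p) (Bmat f Am p) j i *v x i)"
    using imv_fin[OF xN] j1 by simp
  also have "\<dots> = (\<Sum>i=1..N. \<Sum>m=1..p. (complex_of_real (gg i j) * Fm f m i j) *s (Am m *v x i))"
  proof (rule sum.cong)
    fix i assume i: "i \<in> {1..N}"
    have "imm (Smat f Am p) (Bmat f Am p) j i *v x i = smat (gg i j) (Mder f Am p (i + j - 1)) *v x i"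
      using i j1 by (simp add: Bh_gg gg_sym add.commute)
    also have "\<dots> = (\<Sum>m=1..p. (complex_of_real (gg i j) * Fm f m i j) *s (Am m *v x i))"
      by (simp add: M_sum[OF r_pos analytic symmetric] smat_mv mv_sum_l smult_sum smult_smult Fm_def)
    finally show "imm (Smat f Am p) (Bmat f Am p) j i *v x i =
        (\<Sum>m=1..p. (complex_of_real (gg i j) * Fm f m i j) *s (Am m *v x i))" .
  qed simp
  also have "\<dots> = (\<Sum>m=1..p. \<Sum>i=1..N. (complex_of_real (gg i j) * Fm f m i j) *s (Am m *v x i))"
    by (rule sum.swap)
  also have "\<dots> = (\<Sum>m=1..p. Am m *v (\<Sum>i=1..N. (complex_of_real (gg i j) * Fm f m i j) *s x i))"
    by (simp add: mv_sum_r vector_scalar_commute)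
  finally show ?thesis .
qed

end


lemma idot_fin:
  assumes "\<forall>i>N. y i = 0"
  shows "idot x y = (\<Sum>j=1..N. bdot (x j) (y j))"
  unfolding idot_def by (rule suminf_Suc_fin) (simp add: assms)

lemma idot_fin_l:
  assumes "\<forall>i>N. x i = 0"
  shows "idot x y = (\<Sum>j=1..N. bdot (x j) (y j))"
  unfolding idot_def by (rule suminf_Suc_fin) (simp add: assms bdot_def)

lemma inorm_fin:
  assumes "\<forall>i>N. y i = 0"
  shows "inorm y = sqrt (\<Sum>j=1..N. (norm (y j))^2)"
proof -
  have "(\<Sum>l. (norm (y (Suc l)))^2) = (\<Sum>j=1..N. (norm (y j))^2)"
    by (rule suminf_Suc_fin[where g = "\<lambda>j. (norm (y j))^2"]) (simp add: assms)
  then show ?thesis by (simp add: inorm_def)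
qed

lemma padc_supp:
  assumes "Q 0 = 0" "\<forall>i>k. Q i = 0"
  shows "padc k Q = Q"
  using assms by (auto simp: padc_def fun_eq_iff not_le)

context
  fixes f :: "nat \<Rightarrow> complex \<Rightarrow> complex" and Am :: "nat \<Rightarrow> complex^'n::finite^'n" and p :: nat
    and r :: real
  assumes r_pos: "r > 0"
    and analytic: "\<forall>m\<in>{1..p}. f m holomorphic_on ball 0 r"
    and symmetric: "\<forall>z\<in>ball 0 r. transpose (Mfun f Am p z) = Mfun f Am p z"
    and M0_inv: "invertible (Mder f Am p 0)"
    and S_inv: "imat_invertible (Smat f Am p)"
begin

lemma step_eq:
  assumes k1: "k \<ge> 1" and Qc0: "Qc 0 = 0" and Qck: "\<forall>i>k. Qc i = 0"
    and Qp0: "Qp 0 = 0" and Qpk: "\<forall>i>k - 1. Qp i = 0"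
  shows "stepI (imm (Smat f Am p) (Amat f Am p)) (imm (Smat f Am p) (Bmat f Am p)) (Qp, Qc, wp, wc)
       = stepII f Am p k (Qp, Qc, wp, wc)"
proof -
  define Ah where "Ah = imm (Smat f Am p) (Amat f Am p)"
  define Bh where "Bh = imm (Smat f Am p) (Bmat f Am p)"
  define wI where "wI = (THE w. bvec w \<and> imv Ah w = imv Bh Qc)"
  define zI where "zI = imv Bh wI"
  define \<alpha>I where "\<alpha>I = idot zI Qc"
  define \<beta>I where "\<beta>I = idot zI Qp"
  define \<gamma>I where "\<gamma>I = idot zI wI"
  define tkkI where "tkkI = \<alpha>I / wc"
  define tpkI where "tpkI = \<beta>I / wp"
  define wperpI where "wperpI = (\<lambda>i. wI i - tkkI *s Qc i - tpkI *s Qp i)"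
  define tnI where "tnI = complex_of_real (inorm wperpI)"
  define QnI where "QnI = (\<lambda>i. inverse tnI *s wperpI i)"
  define wnI where "wnI = (\<gamma>I - 2 * tkkI * \<alpha>I - 2 * tpkI * \<beta>I + tkkI^2 * wc + tpkI^2 * wp) / tnI^2"
  have I: "stepI Ah Bh (Qp, Qc, wp, wc) = ((Qc, QnI, wc, wnI), (tkkI, tpkI, tnI))"
    unfolding stepI_def Let_def prod.case QnI_def wnI_def tnI_def wperpI_def tkkI_def tpkI_def
      \<alpha>I_def \<beta>I_def \<gamma>I_def zI_def wI_def
    by (rule refl)
  define W2 where "W2 = Wv f Am p k Qc"
  define Z2 where "Z2 = (\<lambda>j. if 1 \<le> j \<and> j \<le> k + 1 then
                     (\<Sum>m=1..p. Am m *v (\<Sum>i=1..k+1. (complex_of_real (gg i j) * Fm f m i j) *s W2 i))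
                   else 0)"
  define \<alpha>2 where "\<alpha>2 = (\<Sum>j=1..k+1. bdot (Z2 j) (padc k Qc j))"
  define \<beta>2 where "\<beta>2 = (\<Sum>j=1..k+1. bdot (Z2 j) (padc (k - 1) Qp j))"
  define \<gamma>2 where "\<gamma>2 = (\<Sum>j=1..k+1. bdot (Z2 j) (W2 j))"
  define tkk2 where "tkk2 = \<alpha>2 / wc"
  define tpk2 where "tpk2 = \<beta>2 / wp"
  define Wperp2 where "Wperp2 = (\<lambda>j. if 1 \<le> j \<and> j \<le> k + 1 then
                        W2 j - tkk2 *s padc k Qc j - tpk2 *s padc (k - 1) Qp j else 0)"
  define tn2 where "tn2 = complex_of_real (sqrt (\<Sum>j=1..k+1. (norm (Wperp2 j))^2))"
  define Qn2 where "Qn2 = (\<lambda>j. inverse tn2 *s Wperp2 j)"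
  define wn2 where "wn2 = (\<gamma>2 - 2 * tkk2 * \<alpha>2 - 2 * tpk2 * \<beta>2 + tkk2^2 * wc + tpk2^2 * wp) / tn2^2"
  have II: "stepII f Am p k (Qp, Qc, wp, wc) = ((Qc, Qn2, wc, wn2), (tkk2, tpk2, tn2))"
    unfolding stepII_def Let_def prod.case Qn2_def wn2_def tn2_def Wperp2_def tkk2_def tpk2_def
      \<alpha>2_def \<beta>2_def \<gamma>2_def Z2_def W2_def Wv_def
    by (rule refl)
  have pc: "padc k Qc = Qc" using Qc0 Qck by (rule padc_supp)
  have pp: "padc (k - 1) Qp = Qp" using Qp0 Qpk by (rule padc_supp)
  have wW: "wI = W2"
    unfolding wI_def W2_def Ah_def Bh_def by (rule the_w(2)[OF M0_inv S_inv k1 Qc0 Qck])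
  have W2s: "\<forall>i>k+1. W2 i = 0" "W2 0 = 0" unfolding W2_def by (rule Wv_supp)+
  have zZ: "zI j = Z2 j" if "j \<in> {1..k+1}" for j
    using that unfolding zI_def wW Z2_def Bh_def
    by (simp add: Bh_Z[OF r_pos analytic symmetric W2s(1)])
  have Qck': "\<forall>i>k+1. Qc i = 0" using Qck by simp
  have Qpk': "\<forall>i>k+1. Qp i = 0" using Qpk by simp
  have a: "\<alpha>I = \<alpha>2"
    unfolding \<alpha>I_def \<alpha>2_def pc idot_fin[OF Qck'] using zZ by (intro sum.cong) auto
  have b: "\<beta>I = \<beta>2"
    unfolding \<beta>I_def \<beta>2_def pp idot_fin[OF Qpk'] using zZ by (intro sum.cong) auto
  have c: "\<gamma>I = \<gamma>2"
    unfolding \<gamma>I_def \<gamma>2_def wW idot_fin[OF W2s(1)] using zZ by (intro sum.cong) auto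
  have tk: "tkkI = tkk2" "tpkI = tpk2" unfolding tkkI_def tkk2_def tpkI_def tpk2_def a b by auto
  have wp_eq: "wperpI = Wperp2"
  proof (rule ext)
    fix i
    show "wperpI i = Wperp2 i"
      using W2s Qck' Qpk' Qc0 Qp0 unfolding wperpI_def Wperp2_def pc pp wW tk
      by (cases "i = 0"; cases "i > k + 1") auto
  qed
  have Ws: "\<forall>i>k+1. wperpI i = 0" unfolding wperpI_def wW using W2s Qck' Qpk' by simp
  have tn: "tnI = tn2" unfolding tnI_def tn2_def inorm_fin[OF Ws] by (simp only: wp_eq)
  show ?thesis
    unfolding Ah_def[symmetric] Bh_def[symmetric] I II
    by (simp add: QnI_def Qn2_def wp_eq tn wnI_def wn2_def a b c tk)
qed

end


lemma stepII_supp: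
  shows "fst (fst (stepII f Am p k (Qp, Qc, wp, wc))) = Qc"
    and "fst (snd (fst (stepII f Am p k (Qp, Qc, wp, wc)))) 0 = 0"
    and "\<forall>i>k+1. fst (snd (fst (stepII f Am p k (Qp, Qc, wp, wc)))) i = 0"
  by (simp_all add: stepII_def Let_def)

lemma cc_sym2: "cc (Suc a) (Suc b) = cc (Suc b) (Suc a)"
  by (simp only: cc_closed mult.commute add.commute)

lemma transpose_uminus: "transpose (- A) = - transpose (A::'a::ring_1^'n^'n)"
  by (simp add: transpose_def vec_eq_iff)

lemma transpose_zero[simp]: "transpose (0::'a::zero^'n^'m) = 0"
  by (simp add: transpose_def vec_eq_iff)

lemma bdot_comm: "bdot x y = bdot y x"
  by (simp add: bdot_def mult.commute)

context
  fixes f :: "nat \<Rightarrow> complex \<Rightarrow> complex" and Am :: "nat \<Rightarrow> complex^'n::finite^'n" and p :: nat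
    and r :: real and q1 :: "complex^'n"
  assumes r_pos: "r > 0"
    and analytic: "\<forall>m\<in>{1..p}. f m holomorphic_on ball 0 r"
    and symmetric: "\<forall>z\<in>ball 0 r. transpose (Mfun f Am p z) = Mfun f Am p z"
    and M0_inv: "invertible (Mder f Am p 0)"
    and S_inv: "imat_invertible (Smat f Am p)"
begin

lemma states_eq:
  "stateI (imm (Smat f Am p) (Amat f Am p)) (imm (Smat f Am p) (Bmat f Am p)) (\<lambda>i. if i = 1 then q1 else 0) k
     = stateII f Am p q1 k \<and>
   fst (snd (stateII f Am p q1 k)) 0 = 0 \<and> (\<forall>i>k+1. fst (snd (stateII f Am p q1 k)) i = 0) \<and>
   fst (stateII f Am p q1 k) 0 = 0 \<and> (\<forall>i>k. fst (stateII f Am p q1 k) i = 0)"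
proof (induction k)
  case 0
  let ?Bh = "imm (Smat f Am p) (Bmat f Am p)"
  let ?qv = "\<lambda>i. if i = (1::nat) then q1 else 0"
  have s1: "\<forall>i>1. ?qv i = 0" by simp
  have e0: "idot ?qv (imv ?Bh ?qv) = (\<Sum>j=1..1. bdot (?qv j) (imv ?Bh ?qv j))"
    using idot_fin_l[where N=1 and x="?qv" and y="imv ?Bh ?qv"] by simp
  have e1: "idot ?qv (imv ?Bh ?qv) = bdot q1 (imv ?Bh ?qv 1)"
    unfolding e0 by simp
  have e2': "imv ?Bh ?qv 1 = (if (1::nat) = 0 then 0 else (\<Sum>l=1..1. ?Bh 1 l *v ?qv l))"
    using imv_fin[where N=1 and x="?qv" and X="?Bh" and i=1] by simp
  have e2: "imv ?Bh ?qv 1 = ?Bh 1 1 *v q1"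
    unfolding e2' by simp
  have e3: "?Bh 1 1 = Mder f Am p 1"
    by (simp add: Bh_gg gg_def smat_def vec_eq_iff)
  have e4: "idot ?qv (imv ?Bh ?qv) = bdot q1 (Mder f Am p 1 *v q1)"
    by (simp only: e1 e2 e3)
  show ?case by (simp only: stateI.simps stateII.simps e4) simp
next
  case (Suc k)
  obtain Qp Qc wp wc where st: "stateII f Am p q1 k = (Qp, Qc, wp, wc)" by (cases "stateII f Am p q1 k") auto
  have Qc0: "Qc 0 = 0" and Qck: "\<forall>i>Suc k. Qc i = 0" and Qp0: "Qp 0 = 0" and Qpk: "\<forall>i>Suc k - 1. Qp i = 0"
    using Suc.IH st by auto
  have "stateI (imm (Smat f Am p) (Amat f Am p)) (imm (Smat f Am p) (Bmat f Am p)) (\<lambda>i. if i = 1 then q1 else 0) (Suc k)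
      = fst (stepII f Am p (Suc k) (Qp, Qc, wp, wc))"
    using Suc.IH st step_eq[OF r_pos analytic symmetric M0_inv S_inv _ Qc0 Qck Qp0 Qpk] by simp
  moreover have "stateII f Am p q1 (Suc k) = fst (stepII f Am p (Suc k) (Qp, Qc, wp, wc))"
    using st by simp
  moreover note sp = stepII_supp[where f=f and Am=Am and p=p and k="Suc k" and Qp=Qp and Qc=Qc and wp=wp and wc=wc]
  ultimately show ?case using Qc0 Qck by simp
qed

end

theorem theorem5:
  fixes r :: real and p :: nat
    and f :: "nat \<Rightarrow> complex \<Rightarrow> complex"
    and Am :: "nat \<Rightarrow> complex^'n^'n"
    and q1 :: "complex^'n"
  assumes r_pos: "r > 0"
    and analytic: "\<forall>m\<in>{1..p}. f m holomorphic_on ball 0 r"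
    and symmetric: "\<forall>z\<in>ball 0 r. transpose (Mfun f Am p z) = Mfun f Am p z"
    and M0_inv: "invertible (Mder f Am p 0)"
    and S_inv: "imat_invertible (Smat f Am p)"
  shows
    "let Ah = imm (Smat f Am p) (Amat f Am p);
         Bh = imm (Smat f Am p) (Bmat f Am p);
         qv1 = (\<lambda>i. if i = 1 then q1 else 0)
     in (\<forall>i\<ge>1. \<forall>j\<ge>1. transpose (Ah i j) = Ah j i \<and> transpose (Bh i j) = Bh j i) \<and>
        (\<forall>k\<ge>1.
           (\<exists>!w. bvec w \<and> imv Ah w = imv Bh (qI Ah Bh qv1 k)) \<and>
           bvec (qI Ah Bh qv1 k) \<and>
           (\<forall>i>k. qI Ah Bh qv1 k i = 0) \<and>
           (\<forall>j\<in>{1..k}. qI Ah Bh qv1 k j = QII f Am p q1 k j) \<and>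
           tI Ah Bh qv1 k = tII f Am p q1 k \<and>
           omegaI Ah Bh qv1 k = omegaII f Am p q1 k)"
proof -
  define Ah where "Ah = imm (Smat f Am p) (Amat f Am p)"
  define Bh where "Bh = imm (Smat f Am p) (Bmat f Am p)"
  define qv1 where "qv1 = (\<lambda>i. if i = (1::nat) then q1 else 0)"
  note SE = states_eq[OF r_pos analytic symmetric M0_inv S_inv, of q1, folded Ah_def Bh_def qv1_def]
  have SS: "transpose (Smat f Am p i j) = Smat f Am p j i" if "i \<ge> 2" "j \<ge> 2" for i j
  proof -
    have ab: "i - 1 = Suc (i - 2)" "j - 1 = Suc (j - 2)" using that by auto
    have "cc (i - 1) (j - 1) = cc (j - 1) (i - 1)" by (simp only: ab cc_sym2)
    moreover have "j + i - 2 = i + j - 2" by simp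
    ultimately show ?thesis using that
      by (simp add: Smat_def transpose_smat M_sym[OF r_pos analytic symmetric])
  qed
  have symA: "transpose (Ah i j) = Ah j i" if "i \<ge> 1" "j \<ge> 1" for i j
  proof -
    have a1: "Ah i j = (if i = 1 \<and> j = 1 then - Mder f Am p 0 else if i \<ge> 2 \<and> j \<ge> 2 then Smat f Am p i j else 0)"
      unfolding Ah_def by (rule Ah_explicit) (use that in auto)
    have a2: "Ah j i = (if j = 1 \<and> i = 1 then - Mder f Am p 0 else if j \<ge> 2 \<and> i \<ge> 2 then Smat f Am p j i else 0)"
      unfolding Ah_def by (rule Ah_explicit) (use that in auto)
    show ?thesis
    proof (cases "i = 1 \<and> j = 1")
      case True
      then show ?thesis unfolding a1 a2 by (simp add: transpose_uminus M_sym[OF r_pos analytic symmetric])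
    next
      case False
      show ?thesis
      proof (cases "i \<ge> 2 \<and> j \<ge> 2")
        case True
        then show ?thesis unfolding a1 a2 using SS by auto
      next
        case False2: False
        then show ?thesis unfolding a1 a2 using False by auto
      qed
    qed
  qed
  have symB: "transpose (Bh i j) = Bh j i" if "i \<ge> 1" "j \<ge> 1" for i j
  proof -
    have e: "j + i - 1 = i + j - 1" by simp
    have b1: "Bh i j = smat (gg i j) (Mder f Am p (i + j - 1))"
      unfolding Bh_def by (rule Bh_gg) (use that in auto)
    have "Bh j i = smat (gg j i) (Mder f Am p (j + i - 1))"
      unfolding Bh_def by (rule Bh_gg) (use that in auto)
    then have b2: "Bh j i = smat (gg i j) (Mder f Am p (i + j - 1))"
      by (simp only: e gg_sym[OF that])
    show ?thesis unfolding b1 b2 by (simp only: transpose_smat M_sym[OF r_pos analytic symmetric])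
  qed
  have main: "(\<exists>!w. bvec w \<and> imv Ah w = imv Bh (qI Ah Bh qv1 k)) \<and>
           bvec (qI Ah Bh qv1 k) \<and>
           (\<forall>i>k. qI Ah Bh qv1 k i = 0) \<and>
           (\<forall>j\<in>{1..k}. qI Ah Bh qv1 k j = QII f Am p q1 k j) \<and>
           tI Ah Bh qv1 k = tII f Am p q1 k \<and>
           omegaI Ah Bh qv1 k = omegaII f Am p q1 k" if k1: "k \<ge> 1" for k
  proof -
    obtain Qp Qc wp wc where st: "stateII f Am p q1 (k - 1) = (Qp, Qc, wp, wc)"
      by (cases "stateII f Am p q1 (k - 1)") auto
    have SE1: "stateI Ah Bh qv1 (k - 1) = (Qp, Qc, wp, wc)" and Qc0: "Qc 0 = 0"
      and Qck: "\<forall>i>k. Qc i = 0" and Qp0: "Qp 0 = 0" and Qpk: "\<forall>i>k - 1. Qp i = 0"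
      using SE[of "k - 1"] st k1 by auto
    have q: "qI Ah Bh qv1 k = Qc" "QII f Am p q1 k = Qc"
      unfolding qI_def QII_def SE1 st by simp_all
    have ex: "\<exists>!w. bvec w \<and> imv Ah w = imv Bh Qc"
      unfolding Ah_def Bh_def by (rule the_w(1)[OF M0_inv S_inv k1 Qc0 Qck])
    have bv: "bvec Qc" using Qc0 Qck unfolding bvec_def by blast
    have t: "tI Ah Bh qv1 k = tII f Am p q1 k"
    proof -
      have "tI Ah Bh qv1 k = snd (stepI Ah Bh (Qp, Qc, wp, wc))"
        unfolding tI_def SE1 by (rule refl)
      also have "\<dots> = snd (stepII f Am p k (Qp, Qc, wp, wc))"
        unfolding Ah_def Bh_def
        by (simp only: step_eq[OF r_pos analytic symmetric M0_inv S_inv k1 Qc0 Qck Qp0 Qpk])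
      also have "\<dots> = tII f Am p q1 k"
        unfolding tII_def st by (rule refl)
      finally show ?thesis .
    qed
    have o: "omegaI Ah Bh qv1 k = omegaII f Am p q1 k"
      unfolding omegaI_def omegaII_def SE1 st by simp
    show ?thesis using ex bv Qck t o q by simp
  qed
  have A: "\<forall>i\<ge>1. \<forall>j\<ge>1. transpose (Ah i j) = Ah j i \<and> transpose (Bh i j) = Bh j i"
    using symA symB by simp
  have B: "\<forall>k\<ge>1. (\<exists>!w. bvec w \<and> imv Ah w = imv Bh (qI Ah Bh qv1 k)) \<and>
           bvec (qI Ah Bh qv1 k) \<and>
           (\<forall>i>k. qI Ah Bh qv1 k i = 0) \<and>
           (\<forall>j\<in>{1..k}. qI Ah Bh qv1 k j = QII f Am p q1 k j) \<and>
           tI Ah Bh qv1 k = tII f Am p q1 k \<and>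
           omegaI Ah Bh qv1 k = omegaII f Am p q1 k"
    by (intro allI impI, rule main)
  show ?thesis
    unfolding Let_def Ah_def[symmetric] Bh_def[symmetric] qv1_def[symmetric]
    using A B by (rule conjI)
qed

end
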